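(* Let $C$ and $C'$ be configurations on the same board of $l$ rows and $w$ columns containing $n$ tiles. If $C$ can be reconfigured into $C'$ by a sequence of steps each in direction west, south, or east, then there exists a step sequence $S$ of length $O(n l w^2)$, using only west, south and east steps, such that applying $S$ to $C$ yields $C'$.
   Context: A board is a rectangular region of the square lattice, formally a partition $B=(O,W)$ of a rectangular set of grid points into open locations $O$ and blocked locations $W$. A tile is a labeled unit square centered on an open location. A configuration $C=(B,P)$ consists of a board $B$ and a set $P$ of tiles, no two at the same location and none at a blocked location. A step in direction $d\in\{N,E,S,W\}$ transforms a configuration as follows: consider translating every tile by one unit in direction $d$; every tile whose translation would land on a blocked location is temporarily added to the blocked set, and this is repeated until no remaining tile's translation lands on a blocked location; then all remaining tiles are translated by one unit in direction $d$. A step sequence is a sequence of directions, applied as successive steps. $C$ can be reconfigured into $C'$ if some step sequence applied to $C$ yields $C'$. *)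

theory Defs
  imports Main
begin

text \<open>Locations are integer grid points (x, y): x is the column, y the row.\<close>
type_synonym loc = "int \<times> int"

datatype dir = N | E | S | W

fun dvec :: "dir \<Rightarrow> loc" where
  "dvec N = (0, 1)"
| "dvec E = (1, 0)"
| "dvec S = (0, -1)"
| "dvec W = (-1, 0)"

definition shift :: "loc \<Rightarrow> dir \<Rightarrow> loc" where
  "shift p d = (fst p + fst (dvec d), snd p + snd (dvec d))"

definition unshift :: "loc \<Rightarrow> dir \<Rightarrow> loc" where
  "unshift p d = (fst p - fst (dvec d), snd p - snd (dvec d))"

text \<open>A board with l rows and w columns: its open locations form a subset of the
  rectangle of grid points; every other grid point (blocked part of the rectangle or
  outside of it) is treated as blocked.\<close>
definition board :: "nat \<Rightarrow> nat \<Rightarrow> loc set \<Rightarrow> bool" where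
  "board l w Op \<longleftrightarrow> Op \<subseteq> {0..<int w} \<times> {0..<int l}"

type_synonym tiles = "loc \<Rightarrow> nat option"

definition config :: "loc set \<Rightarrow> tiles \<Rightarrow> bool" where
  "config Op P \<longleftrightarrow> dom P \<subseteq> Op"

inductive stuck :: "loc set \<Rightarrow> dir \<Rightarrow> tiles \<Rightarrow> loc \<Rightarrow> bool" for Op d P where
  blocked: "p \<in> dom P \<Longrightarrow> shift p d \<notin> Op \<Longrightarrow> stuck Op d P p"
| chain: "p \<in> dom P \<Longrightarrow> stuck Op d P (shift p d) \<Longrightarrow> stuck Op d P p"

definition step :: "loc set \<Rightarrow> dir \<Rightarrow> tiles \<Rightarrow> tiles" where
  "step Op d P q =
     (if q \<in> dom P \<and> stuck Op d P q then P q
      else if unshift q d \<in> dom P \<and> \<not> stuck Op d P (unshift q d) then P (unshift q d)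
      else None)"

fun steps :: "loc set \<Rightarrow> dir list \<Rightarrow> tiles \<Rightarrow> tiles" where
  "steps Op [] P = P"
| "steps Op (d # ds) P = steps Op ds (step Op d P)"

end

theory Submission
  imports Defs
begin


definition cell :: "loc \<Rightarrow> dir \<Rightarrow> int \<Rightarrow> loc" where
  "cell p d j = (fst p + j * fst (dvec d), snd p + j * snd (dvec d))"

fun opp :: "dir \<Rightarrow> dir" where
  "opp N = S" | "opp S = N" | "opp E = W" | "opp W = E"

lemma shift_cell: "shift p d = cell p d 1"
  by (simp add: shift_def cell_def)

lemma cell_cell[simp]: "cell (cell p d i) d j = cell p d (i + j)"
  by (simp add: cell_def algebra_simps)

lemma cell_0[simp]: "cell p d 0 = p"
  by (simp add: cell_def)

lemma cell_opp: "cell p (opp d) j = cell p d (- j)"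
  by (cases d) (simp_all add: cell_def)

lemma cell_inj[simp]: "cell p d i = cell p d j \<longleftrightarrow> i = j"
  by (cases d) (simp_all add: cell_def)

lemma cell_eq_self[simp]: "cell p d i = p \<longleftrightarrow> i = 0"
  by (cases d) (auto simp: cell_def prod_eq_iff)

lemma unshift_cell: "unshift p d = cell p d (-1)"
  by (simp add: unshift_def cell_def)

definition ahead :: "loc set \<Rightarrow> dir \<Rightarrow> loc \<Rightarrow> loc set" where
  "ahead Op d p = {cell p d j |j. 1 \<le> j \<and> (\<forall>i. 1 \<le> i \<and> i \<le> j \<longrightarrow> cell p d i \<in> Op)}"

lemma ahead_sub: "ahead Op d p \<subseteq> Op"
proof
  fix c assume "c \<in> ahead Op d p"
  then obtain j where "c = cell p d j" "1 \<le> j" "\<forall>i. 1 \<le> i \<and> i \<le> j \<longrightarrow> cell p d i \<in> Op"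
    unfolding ahead_def by blast
  then show "c \<in> Op" by auto
qed

lemma ahead_fin: "finite Op \<Longrightarrow> finite (ahead Op d p)"
  using ahead_sub by (rule finite_subset)

lemma not_in_ahead: "p \<notin> ahead Op d p"
proof
  assume "p \<in> ahead Op d p"
  then obtain j where "p = cell p d j" "1 \<le> j"
    unfolding ahead_def by blast
  then show False by (metis cell_eq_self not_one_le_zero)
qed

lemma ahead_empty: "cell p d 1 \<notin> Op \<Longrightarrow> ahead Op d p = {}"
  unfolding ahead_def by (auto dest: spec[of _ 1])

lemma ahead_step:
  assumes "cell p d 1 \<in> Op"
  shows "ahead Op d p = insert (cell p d 1) (ahead Op d (cell p d 1))"
proof
  show "ahead Op d p \<subseteq> insert (cell p d 1) (ahead Op d (cell p d 1))"
  proof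
    fix c assume "c \<in> ahead Op d p"
    then obtain j where c: "c = cell p d j" "1 \<le> j" "\<forall>i. 1 \<le> i \<and> i \<le> j \<longrightarrow> cell p d i \<in> Op"
      by (auto simp: ahead_def)
    show "c \<in> insert (cell p d 1) (ahead Op d (cell p d 1))"
    proof (cases "j = 1")
      case True then show ?thesis using c by simp
    next
      case False
      have "c \<in> ahead Op d (cell p d 1)" unfolding ahead_def
      proof (intro CollectI exI[of _ "j - 1"] conjI allI impI)
        show "c = cell (cell p d 1) d (j - 1)" using c by simp
        show "1 \<le> j - 1" using c False by simp
        fix i :: int assume "1 \<le> i \<and> i \<le> j - 1"
        then show "cell (cell p d 1) d i \<in> Op" using c(3)[rule_format, of "1 + i"] by simp
      qed
      then show ?thesis by simp
    qed
  qed
next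
  show "insert (cell p d 1) (ahead Op d (cell p d 1)) \<subseteq> ahead Op d p"
  proof
    fix c assume "c \<in> insert (cell p d 1) (ahead Op d (cell p d 1))"
    then show "c \<in> ahead Op d p"
    proof
      assume "c = cell p d 1" then show ?thesis using assms unfolding ahead_def
        by (intro CollectI exI[of _ 1]) auto
    next
      assume "c \<in> ahead Op d (cell p d 1)"
      then obtain j where c: "c = cell p d (1 + j)" "1 \<le> j" "\<forall>i. 1 \<le> i \<and> i \<le> j \<longrightarrow> cell p d (1 + i) \<in> Op"
        by (auto simp: ahead_def)
      have "\<forall>i. 1 \<le> i \<and> i \<le> 1 + j \<longrightarrow> cell p d i \<in> Op"
      proof (intro allI impI)
        fix i :: int assume i: "1 \<le> i \<and> i \<le> 1 + j"
        show "cell p d i \<in> Op"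
        proof (cases "i = 1")
          case True then show ?thesis using assms by simp
        next
          case False then show ?thesis using c(3)[rule_format, of "i - 1"] i by simp
        qed
      qed
      then show ?thesis using c unfolding ahead_def by (intro CollectI exI[of _ "1 + j"]) auto
    qed
  qed
qed

lemma cell1_notin_ahead: "cell p d 1 \<notin> ahead Op d (cell p d 1)"
  using not_in_ahead by blast

lemma stuck_dom: "stuck Op d P p \<Longrightarrow> p \<in> dom P"
  by (induction rule: stuck.induct) auto

lemma stuck_iff:
  assumes fin: "finite Op" and dom: "dom P \<subseteq> Op" and p: "p \<in> dom P"
  shows "stuck Op d P p \<longleftrightarrow> ahead Op d p \<subseteq> dom P"
proof
  assume "stuck Op d P p"
  then show "ahead Op d p \<subseteq> dom P"
  proof (induction rule: stuck.induct)
    case (blocked p) then show ?case using ahead_empty[of p d Op] by (simp add: shift_cell)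
  next
    case (chain p)
    have "cell p d 1 \<in> dom P" using stuck_dom[OF chain(2)] by (simp add: shift_cell)
    then have "cell p d 1 \<in> Op" using dom by blast
    then have "ahead Op d p = insert (cell p d 1) (ahead Op d (cell p d 1))" by (rule ahead_step)
    then show ?case using chain(3) \<open>cell p d 1 \<in> dom P\<close> by (simp add: shift_cell)
  qed
next
  have "\<And>p. card (ahead Op d p) = n \<Longrightarrow> p \<in> dom P \<Longrightarrow> ahead Op d p \<subseteq> dom P \<Longrightarrow> stuck Op d P p" for n
  proof (induction n rule: less_induct)
    case (less n p)
    show ?case
    proof (cases "cell p d 1 \<in> Op")
      case False then show ?thesis using less.prems stuck.blocked[of p P d Op] by (simp add: shift_cell)
    next
      case True
      note st = ahead_step[OF True]
      have "card (ahead Op d p) = Suc (card (ahead Op d (cell p d 1)))"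
        unfolding st by (rule card_insert_disjoint[OF ahead_fin[OF fin] cell1_notin_ahead])
      then have "card (ahead Op d (cell p d 1)) < n" using less.prems(1) by simp
      moreover have "cell p d 1 \<in> dom P" "ahead Op d (cell p d 1) \<subseteq> dom P" using less.prems(3) st by auto
      ultimately have "stuck Op d P (cell p d 1)" using less.IH by blast
      then show ?thesis using less.prems(2) stuck.chain[of p P Op d] by (simp add: shift_cell)
    qed
  qed
  then show "ahead Op d p \<subseteq> dom P \<Longrightarrow> stuck Op d P p" using p by blast
qed

definition mv :: "loc set \<Rightarrow> dir \<Rightarrow> tiles \<Rightarrow> loc \<Rightarrow> loc" where
  "mv Op d P p = (if stuck Op d P p then p else shift p d)"

lemma shift_unshift[simp]: "shift (unshift q d) d = q" "unshift (shift q d) d = q"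
  by (simp_all add: shift_def unshift_def)

lemma mv_in_Op: "dom P \<subseteq> Op \<Longrightarrow> p \<in> dom P \<Longrightarrow> mv Op d P p \<in> Op"
proof (cases "stuck Op d P p")
  case False
  assume "dom P \<subseteq> Op" "p \<in> dom P"
  then have "shift p d \<in> Op" using False stuck.blocked by blast
  then show ?thesis using False by (simp add: mv_def)
qed (auto simp: mv_def)

lemma mv_inj: "inj_on (mv Op d P) (dom P)"
proof (rule inj_onI)
  fix p q assume p: "p \<in> dom P" and q: "q \<in> dom P" and eq: "mv Op d P p = mv Op d P q"
  show "p = q"
  proof (cases "stuck Op d P p"; cases "stuck Op d P q")
    assume "stuck Op d P p" "\<not> stuck Op d P q"
    then show ?thesis using eq q stuck.chain[of q P Op d] by (auto simp: mv_def)
  next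
    assume "\<not> stuck Op d P p" "stuck Op d P q"
    then show ?thesis using eq p stuck.chain[of p P Op d] by (auto simp: mv_def)
  next
    assume "\<not> stuck Op d P p" "\<not> stuck Op d P q"
    then show ?thesis using eq by (auto simp: mv_def shift_def prod_eq_iff)
  qed (use eq in \<open>auto simp: mv_def\<close>)
qed

lemma step_mv: "p \<in> dom P \<Longrightarrow> step Op d P (mv Op d P p) = P p"
  unfolding mv_def step_def using stuck.chain[of p P Op d] by auto

lemma dom_step: "dom (step Op d P) = mv Op d P ` dom P"
proof
  show "dom (step Op d P) \<subseteq> mv Op d P ` dom P"
  proof
    fix q assume q: "q \<in> dom (step Op d P)"
    show "q \<in> mv Op d P ` dom P"
    proof (cases "q \<in> dom P \<and> stuck Op d P q")
      case True then show ?thesis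
        by (intro image_eqI[of _ _ q]) (auto simp: mv_def)
    next
      case False
      then have "unshift q d \<in> dom P \<and> \<not> stuck Op d P (unshift q d)"
        using q False unfolding step_def domIff by (auto split: if_splits)
      then show ?thesis
        by (intro image_eqI[of _ _ "unshift q d"]) (auto simp: mv_def)
    qed
  qed
next
  show "mv Op d P ` dom P \<subseteq> dom (step Op d P)"
  proof
    fix q assume "q \<in> mv Op d P ` dom P"
    then obtain p where "p \<in> dom P" "q = mv Op d P p" by blast
    then show "q \<in> dom (step Op d P)" using step_mv[of p P Op d] by auto
  qed
qed

lemma dom_step_sub: "dom P \<subseteq> Op \<Longrightarrow> dom (step Op d P) \<subseteq> Op"
  unfolding dom_step using mv_in_Op by blast

lemma dom_steps_sub: "dom P \<subseteq> Op \<Longrightarrow> dom (steps Op ds P) \<subseteq> Op"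
  by (induction ds arbitrary: P) (simp_all add: dom_step_sub)

lemma steps_append: "steps Op (xs @ ys) P = steps Op ys (steps Op xs P)"
  by (induction xs arbitrary: P) auto

fun track :: "loc set \<Rightarrow> dir list \<Rightarrow> tiles \<Rightarrow> loc \<Rightarrow> loc" where
  "track Op [] P p = p"
| "track Op (d # ds) P p = track Op ds (step Op d P) (mv Op d P p)"

lemma track_props:
  "(\<forall>p\<in>dom P. steps Op ds P (track Op ds P p) = P p) \<and> dom (steps Op ds P) = track Op ds P ` dom P
   \<and> inj_on (track Op ds P) (dom P)"
proof (induction ds arbitrary: P)
  case Nil then show ?case by auto
next
  case (Cons d ds)
  let ?P1 = "step Op d P"
  have IH: "\<forall>p\<in>dom ?P1. steps Op ds ?P1 (track Op ds ?P1 p) = ?P1 p"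
    "dom (steps Op ds ?P1) = track Op ds ?P1 ` dom ?P1" "inj_on (track Op ds ?P1) (dom ?P1)"
    using Cons by auto
  have d1: "dom ?P1 = mv Op d P ` dom P" by (rule dom_step)
  show ?case
  proof (intro conjI ballI)
    fix p assume p: "p \<in> dom P"
    then have "mv Op d P p \<in> dom ?P1" using d1 by auto
    then show "steps Op (d # ds) P (track Op (d # ds) P p) = P p" using IH(1) step_mv[OF p] by simp
  next
    show "dom (steps Op (d # ds) P) = track Op (d # ds) P ` dom P"
      using IH(2) d1 by (simp add: image_image)
  next
    show "inj_on (track Op (d # ds) P) (dom P)"
    proof -
      have "inj_on (track Op ds ?P1) (mv Op d P ` dom P)" using IH(3) d1 by simp
      then have "inj_on (track Op ds ?P1 \<circ> mv Op d P) (dom P)"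
        using comp_inj_on[OF mv_inj[of Op d P]] by blast
      then show ?thesis unfolding inj_on_def by simp
    qed
  qed
qed

lemma steps_eqI:
  assumes "\<forall>p\<in>dom P. track Op ds1 P p = track Op ds2 P p"
  shows "steps Op ds1 P = steps Op ds2 P"
proof
  fix q
  have i: "track Op ds1 P ` dom P = track Op ds2 P ` dom P" using assms by (auto simp: image_def)
  show "steps Op ds1 P q = steps Op ds2 P q"
  proof (cases "q \<in> track Op ds1 P ` dom P")
    case True
    then obtain p where p: "p \<in> dom P" "q = track Op ds1 P p" by auto
    then show ?thesis using track_props[of P Op ds1] track_props[of P Op ds2] assms by auto
  next
    case False
    then have "q \<notin> dom (steps Op ds1 P)" "q \<notin> dom (steps Op ds2 P)"
      using track_props[of P Op ds1] track_props[of P Op ds2] i by auto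
    then show ?thesis by (simp add: domIff)
  qed
qed



lemma ahead_trans:
  assumes "c \<in> ahead Op d p" shows "ahead Op d c \<subseteq> ahead Op d p"
proof
  fix x assume x: "x \<in> ahead Op d c"
  obtain j where c: "c = cell p d j" "1 \<le> j" "\<forall>i. 1 \<le> i \<and> i \<le> j \<longrightarrow> cell p d i \<in> Op"
    using assms unfolding ahead_def by blast
  obtain k where k: "x = cell c d k" "1 \<le> k" "\<forall>i. 1 \<le> i \<and> i \<le> k \<longrightarrow> cell c d i \<in> Op"
    using x unfolding ahead_def by blast
  show "x \<in> ahead Op d p" unfolding ahead_def
  proof (intro CollectI exI[of _ "j + k"] conjI allI impI)
    show "x = cell p d (j + k)" using c k by simp
    show "1 \<le> j + k" using c k by simp
    fix i :: int assume i: "1 \<le> i \<and> i \<le> j + k"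
    show "cell p d i \<in> Op"
    proof (cases "i \<le> j")
      case True then show ?thesis using c(3) i by simp
    next
      case False then show ?thesis using k(3)[rule_format, of "i - j"] i c(1) by simp
    qed
  qed
qed

lemma ahead_next:
  assumes "c \<in> ahead Op d p \<or> c = p" "cell c d 1 \<in> Op"
  shows "cell c d 1 \<in> ahead Op d p"
  using assms(1)
proof
  assume "c = p" then show ?thesis using assms(2) unfolding ahead_def
    by (intro CollectI exI[of _ 1]) auto
next
  assume "c \<in> ahead Op d p"
  then obtain j where c: "c = cell p d j" "1 \<le> j" "\<forall>i. 1 \<le> i \<and> i \<le> j \<longrightarrow> cell p d i \<in> Op"
    unfolding ahead_def by blast
  show ?thesis unfolding ahead_def
  proof (intro CollectI exI[of _ "j + 1"] conjI allI impI)
    show "cell c d 1 = cell p d (j + 1)" using c by simp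
    show "1 \<le> j + 1" using c by simp
    fix i :: int assume i: "1 \<le> i \<and> i \<le> j + 1"
    show "cell p d i \<in> Op"
    proof (cases "i \<le> j")
      case True then show ?thesis using c(3) i by simp
    next
      case False then have "i = j + 1" using i by simp
      then show ?thesis using assms(2) c(1) by simp
    qed
  qed
qed

lemma ahead_prev:
  assumes "cell c d 1 \<in> ahead Op d p" "c \<noteq> p"
  shows "c \<in> ahead Op d p"
proof -
  obtain j where c: "cell c d 1 = cell p d j" "1 \<le> j" "\<forall>i. 1 \<le> i \<and> i \<le> j \<longrightarrow> cell p d i \<in> Op"
    using assms(1) unfolding ahead_def by blast
  have cc: "c = cell p d (j - 1)"
  proof -
    have "c = cell (cell c d 1) d (-1)" by simp
    also have "\<dots> = cell p d (j - 1)" using c(1) by simp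
    finally show ?thesis .
  qed
  have "j \<noteq> 1" using cc assms(2) by auto
  show ?thesis unfolding ahead_def
  proof (intro CollectI exI[of _ "j - 1"] conjI allI impI)
    show "c = cell p d (j - 1)" by (rule cc)
    show "1 \<le> j - 1" using c(2) \<open>j \<noteq> 1\<close> by simp
    fix i :: int assume "1 \<le> i \<and> i \<le> j - 1"
    then show "cell p d i \<in> Op" using c(3) by simp
  qed
qed

definition rm :: "loc set \<Rightarrow> dir \<Rightarrow> tiles \<Rightarrow> loc \<Rightarrow> nat" where
  "rm Op d P p = card (ahead Op d p - dom P)"

lemma rm0_iff:
  assumes fin: "finite Op" and dom: "dom P \<subseteq> Op" and p: "p \<in> dom P"
  shows "rm Op d P p = 0 \<longleftrightarrow> stuck Op d P p"
  unfolding rm_def stuck_iff[OF assms]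
  using ahead_fin[OF fin, of d p] by auto

lemma mv_cases: "mv Op d P p = (if stuck Op d P p then p else cell p d 1)"
  by (simp add: mv_def shift_cell)

lemma L1:
  assumes fin: "finite Op" and dom: "dom P \<subseteq> Op" and p: "p \<in> dom P"
  shows "rm Op d (step Op d P) (mv Op d P p) = rm Op d P p - 1"
proof (cases "stuck Op d P p")
  case True
  have "ahead Op d p \<subseteq> dom (step Op d P)"
  proof
    fix c assume c: "c \<in> ahead Op d p"
    then have cd: "c \<in> dom P" using True stuck_iff[OF assms] by blast
    have "ahead Op d c \<subseteq> dom P" using ahead_trans[OF c] True stuck_iff[OF assms] by blast
    then have "stuck Op d P c" using stuck_iff[OF fin dom cd] by blast
    then have "mv Op d P c = c" by (simp add: mv_def)
    then show "c \<in> dom (step Op d P)" unfolding dom_step using cd by (metis imageI)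
  qed
  then have "rm Op d (step Op d P) p = 0" unfolding rm_def by (metis Diff_eq_empty_iff card.empty)
  moreover have "rm Op d P p = 0" using rm0_iff[OF assms] True by simp
  ultimately show ?thesis using True by (simp add: mv_def)
next
  case False
  let ?A = "ahead Op d p" and ?P1 = "step Op d P"
  have mvp: "mv Op d P p = cell p d 1" using False by (simp add: mv_cases)
  have p1: "cell p d 1 \<in> Op" using mv_in_Op[OF dom p, of d] mvp by simp
  have A: "?A = insert (cell p d 1) (ahead Op d (cell p d 1))" by (rule ahead_step[OF p1])
  have img: "dom ?P1 \<inter> ?A = mv Op d P ` (dom P \<inter> insert p ?A)"
  proof
    show "dom ?P1 \<inter> ?A \<subseteq> mv Op d P ` (dom P \<inter> insert p ?A)"
    proof
      fix c assume c: "c \<in> dom ?P1 \<inter> ?A"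
      then obtain q where q: "q \<in> dom P" "c = mv Op d P q" unfolding dom_step by blast
      show "c \<in> mv Op d P ` (dom P \<inter> insert p ?A)"
      proof (cases "stuck Op d P q")
        case True then show ?thesis using q c by (simp add: mv_def)
      next
        case False
        then have "c = cell q d 1" using q by (simp add: mv_cases)
        then have "q = p \<or> q \<in> ?A" using ahead_prev[of q d Op p] c by blast
        then show ?thesis using q by blast
      qed
    qed
  next
    show "mv Op d P ` (dom P \<inter> insert p ?A) \<subseteq> dom ?P1 \<inter> ?A"
    proof
      fix c assume "c \<in> mv Op d P ` (dom P \<inter> insert p ?A)"
      then obtain q where q: "q \<in> dom P" "q = p \<or> q \<in> ?A" "c = mv Op d P q" by blast
      have "c \<in> dom ?P1" unfolding dom_step using q by blast
      moreover have "c \<in> ?A"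
      proof (cases "stuck Op d P q")
        case True
        then have "q \<noteq> p" using False by blast
        then show ?thesis using True q by (simp add: mv_def)
      next
        case False
        then have "c = cell q d 1" using q by (simp add: mv_cases)
        moreover have "cell q d 1 \<in> Op" using mv_in_Op[OF dom q(1), of d] False by (simp add: mv_cases)
        ultimately show ?thesis using ahead_next[of q Op d p] q(2) by blast
      qed
      ultimately show "c \<in> dom ?P1 \<inter> ?A" by blast
    qed
  qed
  have finA: "finite ?A" by (rule ahead_fin[OF fin])
  have "card (dom ?P1 \<inter> ?A) = card (dom P \<inter> insert p ?A)"
    unfolding img by (rule card_image) (rule inj_on_subset[OF mv_inj], blast)
  also have "dom P \<inter> insert p ?A = insert p (dom P \<inter> ?A)" using p by blast
  also have "card \<dots> = Suc (card (dom P \<inter> ?A))"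
    using finA not_in_ahead[of p Op d] by (simp add: card_insert_disjoint)
  finally have cardeq: "card (?A \<inter> dom ?P1) = Suc (card (?A \<inter> dom P))" by (simp add: Int_commute)
  have p1d: "cell p d 1 \<in> dom ?P1" unfolding dom_step using p mvp by (metis imageI)
  have "ahead Op d (cell p d 1) - dom ?P1 = ?A - dom ?P1" unfolding A using p1d by blast
  then have "rm Op d ?P1 (mv Op d P p) = card ?A - card (?A \<inter> dom ?P1)"
    unfolding rm_def mvp using finA by (simp add: card_Diff_subset_Int)
  moreover have "rm Op d P p = card ?A - card (?A \<inter> dom P)"
    unfolding rm_def using finA by (simp add: card_Diff_subset_Int)
  ultimately show ?thesis using cardeq by simp
qed



lemma cell_opp_back[simp]: "cell (cell q d 1) (opp d) 1 = q"
  by (simp add: cell_opp)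

lemma cell_back_opp: "cell c (opp d) 1 = cell c d (-1)"
  by (simp add: cell_opp)

lemma L2:
  assumes fin: "finite Op" and dom: "dom P \<subseteq> Op" and p: "p \<in> dom P"
  shows "rm Op (opp d) (step Op d P) (mv Op d P p) =
         (if stuck Op d P p then rm Op (opp d) P p else rm Op (opp d) P p + 1)"
proof -
  let ?B = "ahead Op (opp d) p" and ?P1 = "step Op d P"
  have finB: "finite ?B" by (rule ahead_fin[OF fin])
  have bk: "q = cell (mv Op d P q) (opp d) 1" if "\<not> stuck Op d P q" for q
    using that by (simp add: mv_cases)
  have inj: "card (mv Op d P ` (dom P \<inter> ?B)) = card (dom P \<inter> ?B)"
    by (rule card_image) (rule inj_on_subset[OF mv_inj], blast)
  show ?thesis
  proof (cases "stuck Op d P p")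
    case True
    have mvp: "mv Op d P p = p" using True by (simp add: mv_def)
    have img: "dom ?P1 \<inter> ?B = mv Op d P ` (dom P \<inter> ?B)"
    proof
      show "dom ?P1 \<inter> ?B \<subseteq> mv Op d P ` (dom P \<inter> ?B)"
      proof
        fix c assume c: "c \<in> dom ?P1 \<inter> ?B"
        then obtain q where q: "q \<in> dom P" "c = mv Op d P q" unfolding dom_step by blast
        show "c \<in> mv Op d P ` (dom P \<inter> ?B)"
        proof (cases "stuck Op d P q")
          case True then show ?thesis using q c by (simp add: mv_def)
        next
          case False
          then have qc: "q = cell c (opp d) 1" using bk q by simp
          have "q \<in> Op" using q dom by blast
          then have "q \<in> ?B" using ahead_next[of c Op "opp d" p] c qc by blast
          then show ?thesis using q by blast
        qed
      qed
    next
      show "mv Op d P ` (dom P \<inter> ?B) \<subseteq> dom ?P1 \<inter> ?B"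
      proof
        fix c assume "c \<in> mv Op d P ` (dom P \<inter> ?B)"
        then obtain q where q: "q \<in> dom P" "q \<in> ?B" "c = mv Op d P q" by blast
        have "c \<in> dom ?P1" unfolding dom_step using q by blast
        moreover have "c \<in> ?B"
        proof (cases "stuck Op d P q")
          case True then show ?thesis using q by (simp add: mv_def)
        next
          case False
          have "c \<noteq> p"
          proof
            assume "c = p"
            then have "mv Op d P q = mv Op d P p" using q mvp by simp
            then have "q = p" using mv_inj[of Op d P] q p by (simp add: inj_on_def)
            then show False using q not_in_ahead by blast
          qed
          moreover have "cell c (opp d) 1 \<in> ?B" using bk[OF False] q by simp
          ultimately show ?thesis using ahead_prev[of c "opp d" Op p] by blast
        qed
        ultimately show "c \<in> dom ?P1 \<inter> ?B" by blast
      qed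
    qed
    have "rm Op (opp d) ?P1 p = card ?B - card (?B \<inter> dom ?P1)"
      unfolding rm_def using finB by (simp add: card_Diff_subset_Int)
    also have "?B \<inter> dom ?P1 = mv Op d P ` (dom P \<inter> ?B)" using img by blast
    also have "card ?B - card \<dots> = card ?B - card (?B \<inter> dom P)" using inj by (simp add: Int_commute)
    also have "\<dots> = rm Op (opp d) P p"
      unfolding rm_def using finB by (simp add: card_Diff_subset_Int)
    finally show ?thesis using True mvp by simp
  next
    case False
    have mvp: "mv Op d P p = cell p d 1" using False by (simp add: mv_cases)
    have p1: "cell p d 1 \<in> Op" using mv_in_Op[OF dom p, of d] mvp by simp
    have "cell (cell p d 1) (opp d) 1 \<in> Op" using p dom by auto
    from ahead_step[OF this]
    have B1: "ahead Op (opp d) (cell p d 1) = insert p ?B" by simp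
    have img: "dom ?P1 \<inter> insert p ?B = mv Op d P ` (dom P \<inter> ?B)"
    proof
      show "dom ?P1 \<inter> insert p ?B \<subseteq> mv Op d P ` (dom P \<inter> ?B)"
      proof
        fix c assume c: "c \<in> dom ?P1 \<inter> insert p ?B"
        then obtain q where q: "q \<in> dom P" "c = mv Op d P q" unfolding dom_step by blast
        show "c \<in> mv Op d P ` (dom P \<inter> ?B)"
        proof (cases "stuck Op d P q")
          case True
          then have "q \<noteq> p" using False by blast
          then show ?thesis using True q c by (simp add: mv_def)
        next
          case False
          then have qc: "q = cell c (opp d) 1" using bk q by simp
          have "q \<in> Op" using q dom by blast
          then have "q \<in> ?B" using ahead_next[of c Op "opp d" p] c qc by blast
          then show ?thesis using q by blast
        qed
      qed
    next
      show "mv Op d P ` (dom P \<inter> ?B) \<subseteq> dom ?P1 \<inter> insert p ?B"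
      proof
        fix c assume "c \<in> mv Op d P ` (dom P \<inter> ?B)"
        then obtain q where q: "q \<in> dom P" "q \<in> ?B" "c = mv Op d P q" by blast
        have "c \<in> dom ?P1" unfolding dom_step using q by blast
        moreover have "c \<in> insert p ?B"
        proof (cases "stuck Op d P q")
          case True then show ?thesis using q by (simp add: mv_def)
        next
          case False
          have "cell c (opp d) 1 \<in> ?B" using bk[OF False] q by simp
          then show ?thesis using ahead_prev[of c "opp d" Op p] by blast
        qed
        ultimately show "c \<in> dom ?P1 \<inter> insert p ?B" by blast
      qed
    qed
    have pB: "p \<notin> ?B" by (rule not_in_ahead)
    have "rm Op (opp d) ?P1 (mv Op d P p) = card (insert p ?B) - card (insert p ?B \<inter> dom ?P1)"
      unfolding rm_def mvp B1 using finB by (simp add: card_Diff_subset_Int)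
    also have "insert p ?B \<inter> dom ?P1 = mv Op d P ` (dom P \<inter> ?B)" using img by blast
    also have "card (insert p ?B) - card \<dots> = Suc (card ?B) - card (?B \<inter> dom P)"
      using inj finB pB by (simp add: Int_commute)
    also have "\<dots> = rm Op (opp d) P p + 1"
      unfolding rm_def using finB
      by (simp add: card_Diff_subset_Int Suc_diff_le card_mono)
    finally show ?thesis using False by simp
  qed
qed



fun cw :: "nat \<Rightarrow> dir list \<Rightarrow> nat \<Rightarrow> nat" where
  "cw T [] r = r"
| "cw T (x # xs) r = cw T xs (if x = E then r - 1 else min (r + 1) T)"

lemma one_step:
  assumes fin: "finite Op" and dom: "dom P \<subseteq> Op" and p: "p \<in> dom P" and x: "x \<in> {E, W}"
  defines "P1 \<equiv> step Op x P" and "p1 \<equiv> mv Op x P p"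
  shows "rm Op E P1 p1 + rm Op W P1 p1 = rm Op E P p + rm Op W P p
    \<and> rm Op E P1 p1 = (if x = E then rm Op E P p - 1 else min (rm Op E P p + 1) (rm Op E P p + rm Op W P p))
    \<and> p1 = cell p E (int (rm Op E P p) - int (rm Op E P1 p1))"
proof (cases "x = E")
  case True
  have a: "rm Op E P1 p1 = rm Op E P p - 1" unfolding P1_def p1_def True by (rule L1[OF fin dom p])
  have b: "rm Op W P1 p1 = (if stuck Op E P p then rm Op W P p else rm Op W P p + 1)"
    using L2[OF fin dom p, of E] unfolding P1_def p1_def True by simp
  have c: "stuck Op E P p \<longleftrightarrow> rm Op E P p = 0" using rm0_iff[OF fin dom p] by simp
  have m: "p1 = (if stuck Op E P p then p else cell p E 1)" unfolding p1_def True by (simp add: mv_cases)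
  show ?thesis using a b c m True by auto
next
  case False
  then have xW: "x = W" using x by simp
  have a: "rm Op W P1 p1 = rm Op W P p - 1" unfolding P1_def p1_def xW by (rule L1[OF fin dom p])
  have b: "rm Op E P1 p1 = (if stuck Op W P p then rm Op E P p else rm Op E P p + 1)"
    using L2[OF fin dom p, of W] unfolding P1_def p1_def xW by simp
  have c: "stuck Op W P p \<longleftrightarrow> rm Op W P p = 0" using rm0_iff[OF fin dom p] by simp
  have cw1: "cell p W 1 = cell p E (-1)" by (simp add: cell_def)
  have m: "p1 = (if stuck Op W P p then p else cell p E (-1))" unfolding p1_def xW by (simp add: mv_cases cw1)
  show ?thesis using a b c m xW by auto
qed

lemma walk:
  assumes fin: "finite Op"
  shows "dom P \<subseteq> Op \<Longrightarrow> p \<in> dom P \<Longrightarrow> set ds \<subseteq> {E, W} \<Longrightarrow>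
   rm Op E (steps Op ds P) (track Op ds P p) + rm Op W (steps Op ds P) (track Op ds P p) = rm Op E P p + rm Op W P p
   \<and> rm Op E (steps Op ds P) (track Op ds P p) = cw (rm Op E P p + rm Op W P p) ds (rm Op E P p)
   \<and> track Op ds P p = cell p E (int (rm Op E P p) - int (rm Op E (steps Op ds P) (track Op ds P p)))"
proof (induction ds arbitrary: P p)
  case Nil then show ?case by simp
next
  case (Cons x ds)
  let ?P1 = "step Op x P" and ?p1 = "mv Op x P p"
  have x: "x \<in> {E, W}" using Cons.prems by simp
  have d1: "dom ?P1 \<subseteq> Op" using dom_step_sub Cons.prems by blast
  have p1: "?p1 \<in> dom ?P1" unfolding dom_step using Cons.prems by blast
  note os = one_step[OF fin Cons.prems(1,2) x]
  have s: "set ds \<subseteq> {E, W}" using Cons.prems(3) by simp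
  note IH' = Cons.IH[OF d1 p1 s]
  obtain a b rf wf where ab: "a = rm Op E ?P1 ?p1" "b = rm Op W ?P1 ?p1"
    and fw: "rf = rm Op E (steps Op ds ?P1) (track Op ds ?P1 ?p1)" "wf = rm Op W (steps Op ds ?P1) (track Op ds ?P1 ?p1)"
    by blast
  obtain rE rW where rr: "rE = rm Op E P p" "rW = rm Op W P p" by blast
  have i1: "rf + wf = a + b" "rf = cw (a + b) ds a" "track Op ds ?P1 ?p1 = cell ?p1 E (int a - int rf)"
    using IH' unfolding ab fw by auto
  have o1: "a + b = rE + rW" "a = (if x = E then rE - 1 else min (rE + 1) (rE + rW))"
     "?p1 = cell p E (int rE - int a)"
    using os unfolding ab rr by auto
  have g1: "rf + wf = rE + rW" using i1 o1 by simp
  have g2: "rf = cw (rE + rW) (x # ds) rE" using i1 o1 by simp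
  have g3: "track Op (x # ds) P p = cell p E (int rE - int rf)" using i1 o1 by (simp add: algebra_simps)
  show ?case using g1 g2 g3 unfolding fw rr by simp
qed



lemma cw_append: "cw T (xs @ ys) r = cw T ys (cw T xs r)"
  by (induction xs arbitrary: r) auto

lemma cw_repE: "cw T (replicate k E) r = r - k"
  by (induction k arbitrary: r) auto

lemma cw_repW: "r \<le> T \<Longrightarrow> cw T (replicate k W) r = min (r + k) T"
  by (induction k arbitrary: r) auto

lemma cw_id1: "r \<le> T \<Longrightarrow> cw T (replicate b E @ replicate b W @ replicate b E) r = cw T (replicate b E) r"
proof -
  assume r: "r \<le> T"
  have "cw T (replicate b E @ replicate b W @ replicate b E) r = min (r - b + b) T - b"
    using r by (simp add: cw_append cw_repE cw_repW del: replicate_append_same)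
  also have "\<dots> = r - b" using r by (cases "b \<le> r") (simp_all add: min_def)
  finally show ?thesis by (simp add: cw_repE)
qed

lemma cw_id2: "r \<le> T \<Longrightarrow> cw T (replicate b W @ replicate b E @ replicate b W) r = cw T (replicate b W) r"
proof -
  assume r: "r \<le> T"
  have m: "min (r + b) T \<le> T" by simp
  have m2: "min (r + b) T - b \<le> T" by simp
  have "cw T (replicate b W @ replicate b E @ replicate b W) r = min (min (r + b) T - b + b) T"
    using r m m2 by (simp add: cw_append cw_repE cw_repW del: replicate_append_same)
  also have "\<dots> = min (r + b) T" by (simp add: min_def)
  finally show ?thesis using r by (simp add: cw_repW)
qed

lemma cw_id3: "r \<le> T \<Longrightarrow> T \<le> w \<Longrightarrow> cw T (replicate (Suc w) E) r = cw T (replicate w E) r"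
  by (simp add: cw_repE)

lemma cw_id4: "r \<le> T \<Longrightarrow> T \<le> w \<Longrightarrow> cw T (replicate (Suc w) W) r = cw T (replicate w W) r"
  by (simp add: cw_repW)

lemma steps_cw:
  assumes fin: "finite Op" and dom: "dom P \<subseteq> Op" and s1: "set ds1 \<subseteq> {E, W}" and s2: "set ds2 \<subseteq> {E, W}"
    and h: "\<And>p. p \<in> dom P \<Longrightarrow> cw (rm Op E P p + rm Op W P p) ds1 (rm Op E P p) = cw (rm Op E P p + rm Op W P p) ds2 (rm Op E P p)"
  shows "steps Op ds1 P = steps Op ds2 P"
proof (rule steps_eqI, intro ballI)
  fix p assume p: "p \<in> dom P"
  show "track Op ds1 P p = track Op ds2 P p"
  proof -
    let ?T = "rm Op E P p + rm Op W P p" and ?r = "rm Op E P p"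
    have t1: "track Op ds1 P p = cell p E (int ?r - int (cw ?T ds1 ?r))"
      using walk[OF fin dom p s1] by metis
    have t2: "track Op ds2 P p = cell p E (int ?r - int (cw ?T ds2 ?r))"
      using walk[OF fin dom p s2] by metis
    show ?thesis unfolding t1 t2 h[OF p] ..
  qed
qed

lemma snd_cell_EW: "snd (cell p E j) = snd p" "snd (cell p W j) = snd p"
  by (simp_all add: cell_def)

lemma T_le:
  assumes fin: "finite Op" and bd: "Op \<subseteq> {0..<int w} \<times> UNIV" and p: "p \<in> Op"
  shows "rm Op E P p + rm Op W P p \<le> w"
proof -
  let ?A = "ahead Op E p" and ?B = "ahead Op W p"
  have disj: "?A \<inter> ?B = {}"
  proof (rule ccontr)
    assume "?A \<inter> ?B \<noteq> {}"
    then obtain c where "c \<in> ?A" "c \<in> ?B" by blast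
    then obtain j k where "c = cell p E j" "1 \<le> j" "c = cell p W k" "1 \<le> k" unfolding ahead_def by blast
    moreover have "cell p W k = cell p E (- k)" by (simp add: cell_def)
    ultimately show False by simp
  qed
  have sub: "insert p (?A \<union> ?B) \<subseteq> {0..<int w} \<times> {snd p}"
  proof
    fix c assume c: "c \<in> insert p (?A \<union> ?B)"
    then have "c \<in> Op" using p ahead_sub by blast
    moreover have "snd c = snd p" using c unfolding ahead_def by (auto simp: snd_cell_EW)
    ultimately show "c \<in> {0..<int w} \<times> {snd p}" using bd by (cases c) auto
  qed
  have fA: "finite ?A" "finite ?B" using ahead_fin[OF fin] by auto
  have "card (insert p (?A \<union> ?B)) \<le> card ({0..<int w} \<times> {snd p})"
    by (rule card_mono[OF _ sub]) simp
  also have "\<dots> = w" by (simp add: card_cartesian_product)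
  finally have "card (insert p (?A \<union> ?B)) \<le> w" .
  moreover have "card (insert p (?A \<union> ?B)) = Suc (card ?A + card ?B)"
    using fA disj not_in_ahead[of p Op E] not_in_ahead[of p Op W]
    by (simp add: card_Un_disjoint card_insert_disjoint)
  moreover have "rm Op E P p \<le> card ?A" "rm Op W P p \<le> card ?B"
    unfolding rm_def using fA by (auto intro: card_mono)
  ultimately show ?thesis by simp
qed

lemma rep_ok: "x \<in> {E, W} \<Longrightarrow> set (replicate k x) \<subseteq> {E, W}"
  by auto



definition fac :: "dir list \<Rightarrow> dir list \<Rightarrow> bool" where
  "fac v u \<longleftrightarrow> (\<exists>xs ys. u = xs @ v @ ys)"

lemma fac_ext: "fac v x \<Longrightarrow> fac v (a @ x @ b)"
  unfolding fac_def by (metis append.assoc)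

lemma fac_left: "fac v x \<Longrightarrow> fac v (x @ b)"
  using fac_ext[of v x "[]" b] by simp

lemma fac_right: "fac v x \<Longrightarrow> fac v (a @ x)"
  using fac_ext[of v x a "[]"] by simp

fun alt :: "dir \<Rightarrow> nat list \<Rightarrow> dir list" where
  "alt X [] = []"
| "alt X (k # ks) = replicate k X @ alt (opp X) ks"

lemma opp_opp[simp]: "opp (opp X) = X"
  by (cases X) auto

lemma length_alt: "length (alt X ks) = sum_list ks"
  by (induction ks arbitrary: X) auto

lemma alt_exists: "set u \<subseteq> {E, W} \<Longrightarrow> \<exists>X ks. u = alt X ks \<and> X \<in> {E, W} \<and> (\<forall>k\<in>set ks. 1 \<le> k)"
proof (induction u)
  case Nil then show ?case by (intro exI[of _ E] exI[of _ "[]"]) simp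
next
  case (Cons x u)
  then obtain X ks where u: "u = alt X ks" "X \<in> {E, W}" "\<forall>k\<in>set ks. 1 \<le> k" by auto
  have x: "x \<in> {E, W}" using Cons.prems by simp
  show ?case
  proof (cases ks)
    case Nil then show ?thesis using u x by (intro exI[of _ x] exI[of _ "[1]"]) simp
  next
    case (Cons k ks')
    show ?thesis
    proof (cases "x = X")
      case True then show ?thesis using u Cons by (intro exI[of _ X] exI[of _ "Suc k # ks'"]) auto
    next
      case False
      then have "X = opp x" using x u(2) by auto
      then show ?thesis using u Cons x by (intro exI[of _ x] exI[of _ "1 # k # ks'"]) auto
    qed
  qed
qed

fun hv :: "nat list \<Rightarrow> bool" where
  "hv (a # b # c # t) = ((b \<le> a \<and> b \<le> c) \<or> hv (b # c # t))"
| "hv _ = False"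

lemma fac_valley:
  "hv ks \<Longrightarrow> \<forall>k\<in>set ks. 1 \<le> k \<Longrightarrow>
   \<exists>b Y. 1 \<le> b \<and> (Y = X \<or> Y = opp X) \<and> fac (replicate b Y @ replicate b (opp Y) @ replicate b Y) (alt X ks)"
proof (induction ks arbitrary: X rule: hv.induct)
  case (1 a b c t)
  show ?case
  proof (cases "b \<le> a \<and> b \<le> c")
    case True
    have "alt X (a # b # c # t) = replicate a X @ replicate b (opp X) @ replicate c X @ alt (opp X) t"
      by simp
    also have "\<dots> = replicate (a - b) X @ (replicate b X @ replicate b (opp X) @ replicate b X) @ (replicate (c - b) X @ alt (opp X) t)"
      using True by (simp add: replicate_add[symmetric])
    finally have "fac (replicate b X @ replicate b (opp X) @ replicate b X) (alt X (a # b # c # t))"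
      unfolding fac_def by blast
    then show ?thesis using "1.prems" by (intro exI[of _ b] exI[of _ X]) auto
  next
    case False
    then have "hv (b # c # t)" using "1.prems" by auto
    from "1.IH"[OF this, of "opp X"] "1.prems"
    obtain bb Y where "1 \<le> bb" "Y = opp X \<or> Y = X" "fac (replicate bb Y @ replicate bb (opp Y) @ replicate bb Y) (alt (opp X) (b # c # t))"
      by auto
    then show ?thesis by (intro exI[of _ bb] exI[of _ Y]) (auto intro: fac_right)
  qed
qed auto

lemma fac_long:
  "k \<in> set ks \<Longrightarrow> w < k \<Longrightarrow> \<exists>Y. (Y = X \<or> Y = opp X) \<and> fac (replicate (Suc w) Y) (alt X ks)"
proof (induction ks arbitrary: X)
  case Nil then show ?case by simp
next
  case (Cons a ks)
  show ?case
  proof (cases "k = a")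
    case True
    have "a = Suc w + (a - Suc w)" using True Cons.prems by simp
    then have "replicate a X = replicate (Suc w) X @ replicate (a - Suc w) X"
      by (metis replicate_add)
    then have "alt X (a # ks) = [] @ replicate (Suc w) X @ (replicate (a - Suc w) X @ alt (opp X) ks)"
      by simp
    then show ?thesis unfolding fac_def by blast
  next
    case False
    then obtain Y where "Y = opp X \<or> Y = X" "fac (replicate (Suc w) Y) (alt (opp X) ks)"
      using Cons.IH[of "opp X"] Cons.prems by auto
    then show ?thesis by (intro exI[of _ Y]) (auto intro: fac_right)
  qed
qed

lemma hv_cons: "hv t \<Longrightarrow> hv (a # t)"
proof -
  assume h: "hv t"
  then obtain b c d t' where "t = b # c # d # t'" by (cases t rule: hv.cases) auto
  then show ?thesis using h by simp
qed

lemma dec_lemma: "\<not> hv (a # t) \<Longrightarrow> (t \<noteq> [] \<longrightarrow> hd t \<le> a) \<Longrightarrow> sorted_wrt (>) t"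
proof (induction t arbitrary: a)
  case Nil then show ?case by simp
next
  case (Cons b t')
  show ?case
  proof (cases t')
    case Nil then show ?thesis by simp
  next
    case (Cons c t'')
    have ba: "b \<le> a" using Cons.prems by simp
    have cb: "c < b" and nh: "\<not> hv (b # c # t'')" using Cons.prems ba \<open>t' = c # t''\<close> by auto
    have st: "sorted_wrt (>) (c # t'')" using Cons.IH[of b] nh cb Cons by simp
    then show ?thesis using cb Cons by auto
  qed
qed

lemma split_lemma: "\<not> hv ks \<Longrightarrow> \<exists>ys zs. ks = ys @ zs \<and> sorted_wrt (<) ys \<and> sorted_wrt (>) zs"
proof (induction ks)
  case Nil then show ?case by simp
next
  case (Cons a t)
  have nt: "\<not> hv t" using Cons.prems hv_cons by blast
  obtain ys' zs' where yz: "t = ys' @ zs'" "sorted_wrt (<) ys'" "sorted_wrt (>) zs'"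
    using Cons.IH[OF nt] by blast
  show ?case
  proof (cases "t = [] \<or> hd t \<le> a")
    case True
    then have "sorted_wrt (>) t" using dec_lemma[OF Cons.prems] by auto
    then show ?thesis by (intro exI[of _ "[a]"] exI[of _ t]) simp
  next
    case False
    then have ne: "t \<noteq> []" and lt: "a < hd t" by auto
    show ?thesis
    proof (cases ys')
      case Nil then show ?thesis using yz by (intro exI[of _ "[a]"] exI[of _ t]) simp
    next
      case (Cons y ys'')
      have "\<forall>x\<in>set ys'. a < x" using yz(2) lt yz(1) Cons by auto
      then show ?thesis using yz by (intro exI[of _ "a # ys'"] exI[of _ zs']) auto
    qed
  qed
qed

lemma sorted_distinct: "(\<And>x. \<not> R x x) \<Longrightarrow> sorted_wrt R xs \<Longrightarrow> distinct xs"
  by (induction xs) auto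

lemma sum_list_le: "\<forall>x\<in>set xs. x \<le> (w::nat) \<Longrightarrow> sum_list xs \<le> length xs * w"
  by (induction xs) auto

lemma sorted_bound:
  assumes "sorted_wrt R xs" "\<And>x. \<not> R x x" "\<forall>x\<in>set xs. 1 \<le> x \<and> x \<le> (w::nat)"
  shows "sum_list xs \<le> w * w"
proof -
  have "distinct xs" using sorted_distinct assms by blast
  then have "length xs = card (set xs)" by (simp add: distinct_card)
  also have "\<dots> \<le> card {1..w}" using assms(3) by (intro card_mono) auto
  finally have "length xs \<le> w" by simp
  moreover have "sum_list xs \<le> length xs * w" using sum_list_le assms(3) by auto
  ultimately show ?thesis by (meson le_trans mult_le_mono1)
qed

lemma runs_bound:
  assumes "\<not> hv ks" "\<forall>k\<in>set ks. 1 \<le> k \<and> k \<le> (w::nat)"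
  shows "sum_list ks \<le> 2 * w * w"
proof -
  obtain ys zs where yz: "ks = ys @ zs" "sorted_wrt (<) ys" "sorted_wrt (>) zs"
    using split_lemma[OF assms(1)] by blast
  have "sum_list ys \<le> w * w" by (rule sorted_bound[OF yz(2)]) (use assms(2) yz(1) in auto)
  moreover have "sum_list zs \<le> w * w" by (rule sorted_bound[OF yz(3)]) (use assms(2) yz(1) in auto)
  ultimately show ?thesis using yz(1) by simp
qed

definition nofac :: "nat \<Rightarrow> dir list \<Rightarrow> bool" where
  "nofac w u \<longleftrightarrow> (\<forall>b Y. 1 \<le> b \<longrightarrow> Y \<in> {E, W} \<longrightarrow> \<not> fac (replicate b Y @ replicate b (opp Y) @ replicate b Y) u)
     \<and> (\<forall>Y\<in>{E, W}. \<not> fac (replicate (Suc w) Y) u)"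

lemma word_bound:
  assumes "set u \<subseteq> {E, W}" "nofac w u"
  shows "length u \<le> 2 * w * w"
proof -
  obtain X ks where u: "u = alt X ks" "X \<in> {E, W}" "\<forall>k\<in>set ks. 1 \<le> k"
    using alt_exists[OF assms(1)] by blast
  have "\<not> hv ks"
  proof
    assume "hv ks"
    from fac_valley[OF this u(3), of X] obtain b Y where
      "1 \<le> b" "Y = X \<or> Y = opp X" "fac (replicate b Y @ replicate b (opp Y) @ replicate b Y) u"
      using u(1) by blast
    then show False using assms(2) u(2) unfolding nofac_def by auto
  qed
  moreover have "\<forall>k\<in>set ks. 1 \<le> k \<and> k \<le> w"
  proof
    fix k assume k: "k \<in> set ks"
    show "1 \<le> k \<and> k \<le> w"
    proof (rule ccontr)
      assume "\<not> (1 \<le> k \<and> k \<le> w)"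
      then have "w < k" using u(3) k by auto
      from fac_long[OF k this, of X] obtain Y where "Y = X \<or> Y = opp X" "fac (replicate (Suc w) Y) u"
        using u(1) by blast
      then show False using assms(2) u(2) unfolding nofac_def by auto
    qed
  qed
  ultimately have "sum_list ks \<le> 2 * w * w" by (rule runs_bound)
  then show ?thesis using u(1) length_alt by simp
qed

lemma nofac_sub: "nofac w (a @ x @ b) \<Longrightarrow> nofac w x"
  unfolding nofac_def using fac_ext by blast

lemma word_bound_S:
  "set u \<subseteq> {E, W, S} \<Longrightarrow> nofac w u \<Longrightarrow>
   length u \<le> length (filter (\<lambda>x. x = S) u) + (length (filter (\<lambda>x. x = S) u) + 1) * (2 * w * w)"
proof (induction "length u" arbitrary: u rule: less_induct)
  case less
  show ?case
  proof (cases "S \<in> set u")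
    case False
    then have "set u \<subseteq> {E, W}" using less.prems by auto
    then show ?thesis using word_bound less.prems(2) by fastforce
  next
    case True
    then obtain v u' where vu: "u = v @ S # u'" "S \<notin> set v" by (metis split_list_first)
    have sv: "set v \<subseteq> {E, W}" using less.prems(1) vu by auto
    have nv: "nofac w v" using nofac_sub[of w "[]" v "S # u'"] less.prems(2) vu by simp
    have nu: "nofac w u'" using nofac_sub[of w "v @ [S]" u' "[]"] less.prems(2) vu by simp
    have su: "set u' \<subseteq> {E, W, S}" using less.prems(1) vu by auto
    have IH: "length u' \<le> length (filter (\<lambda>x. x = S) u') + (length (filter (\<lambda>x. x = S) u') + 1) * (2 * w * w)"
      using less.hyps[of u'] vu su nu by simp
    have lv: "length v \<le> 2 * w * w" by (rule word_bound[OF sv nv])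
    have fv: "filter (\<lambda>x. x = S) v = []" using vu(2) by (metis (mono_tags, lifting) filter_False)
    show ?thesis using IH lv fv vu(1) by (simp add: algebra_simps)
  qed
qed



lemma id_valley:
  assumes fin: "finite Op" and dom: "dom Z \<subseteq> Op" and Y: "Y \<in> {E, W}"
  shows "steps Op (replicate b Y @ replicate b (opp Y) @ replicate b Y) Z = steps Op (replicate b Y) Z"
proof (rule steps_cw[OF fin dom])
  show "set (replicate b Y @ replicate b (opp Y) @ replicate b Y) \<subseteq> {E, W}" using Y by auto
  show "set (replicate b Y) \<subseteq> {E, W}" using Y by auto
  fix p
  have r: "rm Op E Z p \<le> rm Op E Z p + rm Op W Z p" by simp
  show "cw (rm Op E Z p + rm Op W Z p) (replicate b Y @ replicate b (opp Y) @ replicate b Y) (rm Op E Z p) =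
        cw (rm Op E Z p + rm Op W Z p) (replicate b Y) (rm Op E Z p)"
    using Y cw_id1[OF r] cw_id2[OF r] by auto
qed

lemma id_cap:
  assumes fin: "finite Op" and bd: "Op \<subseteq> {0..<int w} \<times> UNIV" and dom: "dom Z \<subseteq> Op" and Y: "Y \<in> {E, W}"
  shows "steps Op (replicate (Suc w) Y) Z = steps Op (replicate w Y) Z"
proof (rule steps_cw[OF fin dom])
  show "set (replicate (Suc w) Y) \<subseteq> {E, W}" using Y by auto
  show "set (replicate w Y) \<subseteq> {E, W}" using Y by (auto simp del: replicate.simps)
  fix p assume p: "p \<in> dom Z"
  have r: "rm Op E Z p \<le> rm Op E Z p + rm Op W Z p" by simp
  have T: "rm Op E Z p + rm Op W Z p \<le> w" using T_le[OF fin bd] p dom by blast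
  show "cw (rm Op E Z p + rm Op W Z p) (replicate (Suc w) Y) (rm Op E Z p) =
        cw (rm Op E Z p + rm Op W Z p) (replicate w Y) (rm Op E Z p)"
    using Y cw_id3[OF r T] cw_id4[OF r T] by auto
qed

definition phi :: "tiles \<Rightarrow> nat" where
  "phi Z = (\<Sum>q\<in>dom Z. nat (snd q))"

lemma all_stuck: "\<forall>p\<in>dom Z. stuck Op x Z p \<Longrightarrow> step Op x Z = Z"
proof
  fix q assume h: "\<forall>p\<in>dom Z. stuck Op x Z p"
  show "step Op x Z q = Z q"
  proof (cases "q \<in> dom Z")
    case True then show ?thesis using h by (simp add: step_def)
  next
    case False then show ?thesis using h by (auto simp: step_def domIff)
  qed
qed

lemma phi_step:
  assumes fin: "finite Op" and nn: "\<forall>q\<in>Op. 0 \<le> snd q" and dom: "dom Z \<subseteq> Op" and x: "x \<in> {E, W, S}"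
  shows "phi (step Op x Z) \<le> phi Z \<and> (x = S \<and> step Op x Z \<noteq> Z \<longrightarrow> phi (step Op x Z) < phi Z)"
proof -
  have finD: "finite (dom Z)" using fin dom finite_subset by blast
  have re: "phi (step Op x Z) = (\<Sum>p\<in>dom Z. nat (snd (mv Op x Z p)))"
    unfolding phi_def dom_step by (subst sum.reindex[OF mv_inj]) simp
  have le: "nat (snd (mv Op x Z p)) \<le> nat (snd p)" if "p \<in> dom Z" for p
    using x by (auto simp: mv_def shift_def)
  have "(\<Sum>p\<in>dom Z. nat (snd (mv Op x Z p))) \<le> (\<Sum>p\<in>dom Z. nat (snd p))"
    by (rule sum_mono) (rule le)
  then have "phi (step Op x Z) \<le> phi Z" unfolding re unfolding phi_def .
  moreover have "phi (step Op x Z) < phi Z" if xs: "x = S" and ne: "step Op x Z \<noteq> Z"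
  proof -
    obtain p where p: "p \<in> dom Z" "\<not> stuck Op x Z p" using ne all_stuck by blast
    have "mv Op x Z p \<in> Op" by (rule mv_in_Op[OF dom p(1)])
    then have "0 \<le> snd (mv Op x Z p)" using nn by blast
    then have "nat (snd (mv Op x Z p)) < nat (snd p)" using p(2) xs by (simp add: mv_def shift_def)
    then have "(\<Sum>p\<in>dom Z. nat (snd (mv Op x Z p))) < (\<Sum>p\<in>dom Z. nat (snd p))"
      by (intro sum_strict_mono_ex1[OF finD]) (use le p in auto)
    then show ?thesis unfolding re unfolding phi_def .
  qed
  ultimately show ?thesis by blast
qed

lemma countS:
  assumes fin: "finite Op" and nn: "\<forall>q\<in>Op. 0 \<le> snd q"
  shows "dom Z \<subseteq> Op \<Longrightarrow> set ds \<subseteq> {E, W, S} \<Longrightarrow>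
    (\<forall>xs x ys. ds = xs @ x # ys \<longrightarrow> step Op x (steps Op xs Z) \<noteq> steps Op xs Z) \<Longrightarrow>
    length (filter (\<lambda>x. x = S) ds) \<le> phi Z"
proof (induction ds arbitrary: Z)
  case Nil then show ?case by simp
next
  case (Cons x ds)
  let ?Z1 = "step Op x Z"
  have d1: "dom ?Z1 \<subseteq> Op" using dom_step_sub Cons.prems(1) by blast
  have h1: "\<forall>xs y ys. ds = xs @ y # ys \<longrightarrow> step Op y (steps Op xs ?Z1) \<noteq> steps Op xs ?Z1"
  proof (intro allI impI)
    fix xs y ys assume "ds = xs @ y # ys"
    then have "x # ds = (x # xs) @ y # ys" by simp
    then have "step Op y (steps Op (x # xs) Z) \<noteq> steps Op (x # xs) Z"
      using Cons.prems(3)[rule_format, of "x # xs" y ys] by blast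
    then show "step Op y (steps Op xs ?Z1) \<noteq> steps Op xs ?Z1" by simp
  qed
  have IH: "length (filter (\<lambda>x. x = S) ds) \<le> phi ?Z1" using Cons.IH[OF d1 _ h1] Cons.prems(2) by simp
  have ne: "?Z1 \<noteq> Z" using Cons.prems(3)[rule_format, of "[]" x ds] by simp
  have x: "x \<in> {E, W, S}" using Cons.prems(2) by simp
  note ps = phi_step[OF fin nn Cons.prems(1) x]
  show ?case
  proof (cases "x = S")
    case True
    then have "phi ?Z1 < phi Z" using ps ne by blast
    then show ?thesis using IH True by simp
  next
    case False
    then show ?thesis using IH ps by simp
  qed
qed

lemma phi_bound:
  assumes fin: "finite (dom Z)" and bd: "\<forall>q\<in>dom Z. snd q < int l"
  shows "phi Z \<le> card (dom Z) * l"
proof -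
  have "phi Z \<le> of_nat (card (dom Z)) * l" unfolding phi_def
    by (rule sum_bounded_above) (use bd in force)
  then show ?thesis by simp
qed

lemma steps_empty: "steps Op ds Map.empty = Map.empty"
proof (induction ds)
  case Nil then show ?case by simp
next
  case (Cons d ds)
  have "step Op d Map.empty = Map.empty"
  proof -
    have "dom (step Op d Map.empty) = {}" unfolding dom_step by simp
    then show ?thesis by simp
  qed
  then show ?case using Cons by simp
qed

lemma arith_final:
  fixes cS n l w :: nat
  assumes "cS \<le> n * l" "1 \<le> n" "1 \<le> l" "1 \<le> w"
  shows "cS + (cS + 1) * (2 * w * w) \<le> 5 * n * l * w ^ 2"
proof -
  define N where "N = n * l"
  define K where "K = w * w"
  have N1: "1 \<le> N" using assms unfolding N_def by simp
  have ww: "1 \<le> K" using assms unfolding K_def by simp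
  have a: "cS + (cS + 1) * (2 * K) \<le> N + (N + 1) * (2 * K)"
    using assms(1) unfolding N_def by (intro add_mono mult_le_mono1) auto
  have b: "N \<le> N * K" using ww by simp
  have c: "(N + 1) * (2 * K) \<le> (2 * N) * (2 * K)" using N1 by (intro mult_le_mono1) simp
  have d: "N * K + (2 * N) * (2 * K) = 5 * N * K" by (simp add: algebra_simps)
  have e: "5 * n * l * w ^ 2 = 5 * N * K" unfolding N_def K_def by (simp add: power2_eq_square algebra_simps)
  have "cS + (cS + 1) * (2 * K) \<le> 5 * N * K" using a b c d by linarith
  then show ?thesis using e unfolding K_def by (simp add: mult.assoc)
qed



theorem lemma2:
  "\<exists>c::nat. \<forall>(l::nat) (w::nat) (Op::loc set) (P::tiles) (P'::tiles).
     board l w Op \<and> config Op P \<and> config Op P' \<and>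
     (\<exists>ds. set ds \<subseteq> {W, S, E} \<and> steps Op ds P = P') \<longrightarrow>
     (\<exists>ds. set ds \<subseteq> {W, S, E} \<and>
           length ds \<le> c * card (dom P) * l * w ^ 2 \<and> steps Op ds P = P')"
proof (intro exI[of _ 5] allI impI)
  fix l w :: nat and Op :: "loc set" and P P' :: tiles
  assume H: "board l w Op \<and> config Op P \<and> config Op P' \<and> (\<exists>ds. set ds \<subseteq> {W, S, E} \<and> steps Op ds P = P')"
  have bd: "Op \<subseteq> {0..<int w} \<times> {0..<int l}" using H by (simp add: board_def)
  have fin: "finite Op" using bd finite_subset by blast
  have bdw: "Op \<subseteq> {0..<int w} \<times> UNIV" using bd by blast
  have nn: "\<forall>q\<in>Op. 0 \<le> snd q" using bd by auto
  have domP: "dom P \<subseteq> Op" using H by (simp add: config_def)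
  define G where "G ds \<longleftrightarrow> set ds \<subseteq> {W, S, E} \<and> steps Op ds P = P'" for ds
  obtain ds1 where "G ds1" using H unfolding G_def by blast
  then obtain ds0 where G0: "G ds0" and minl: "\<And>ds. G ds \<Longrightarrow> length ds0 \<le> length ds"
    using ex_has_least_nat[of G ds1 length] by blast
  have set0: "set ds0 \<subseteq> {E, W, S}" and st0: "steps Op ds0 P = P'" using G0 unfolding G_def by auto
  have repl: "length ds0 \<le> length (xs @ v' @ ys)"
    if "ds0 = xs @ v @ ys" "steps Op v (steps Op xs P) = steps Op v' (steps Op xs P)" "set v' \<subseteq> {W, S, E}"
    for xs v v' ys
  proof (rule minl)
    have "steps Op (xs @ v' @ ys) P = steps Op ys (steps Op v' (steps Op xs P))" by (simp add: steps_append)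
    also have "\<dots> = steps Op ys (steps Op v (steps Op xs P))" using that(2) by simp
    also have "\<dots> = P'" using st0 that(1) by (simp add: steps_append)
    finally show "G (xs @ v' @ ys)" using that set0 unfolding G_def by auto
  qed
  have dxs: "dom (steps Op xs P) \<subseteq> Op" for xs using dom_steps_sub[OF domP] by blast
  have eff: "\<forall>xs x ys. ds0 = xs @ x # ys \<longrightarrow> step Op x (steps Op xs P) \<noteq> steps Op xs P"
  proof (intro allI impI notI)
    fix xs x ys assume d: "ds0 = xs @ x # ys" and e: "step Op x (steps Op xs P) = steps Op xs P"
    have "length ds0 \<le> length (xs @ [] @ ys)"
      by (rule repl[of xs "[x]" ys]) (use d e in auto)
    then show False using d by simp
  qed
  have nf: "nofac w ds0"
    unfolding nofac_def
  proof (intro conjI allI impI ballI notI)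
    fix b Y assume b: "1 \<le> b" and Y: "Y \<in> {E, W}" and f: "fac (replicate b Y @ replicate b (opp Y) @ replicate b Y) ds0"
    then obtain xs ys where d: "ds0 = xs @ (replicate b Y @ replicate b (opp Y) @ replicate b Y) @ ys"
      unfolding fac_def by blast
    have "length ds0 \<le> length (xs @ replicate b Y @ ys)"
      by (rule repl[OF d]) (use id_valley[OF fin dxs Y] Y in auto)
    then show False using d b by simp
  next
    fix Y assume Y: "Y \<in> {E, W}" and f: "fac (replicate (Suc w) Y) ds0"
    then obtain xs ys where d: "ds0 = xs @ replicate (Suc w) Y @ ys"
      unfolding fac_def by blast
    have "length ds0 \<le> length (xs @ replicate w Y @ ys)"
      by (rule repl[OF d]) (use id_cap[OF fin bdw dxs Y] Y in auto)
    then show False using d by simp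
  qed
  have lb: "length ds0 \<le> length (filter (\<lambda>x. x = S) ds0) + (length (filter (\<lambda>x. x = S) ds0) + 1) * (2 * w * w)"
    by (rule word_bound_S[OF set0 nf])
  have cS: "length (filter (\<lambda>x. x = S) ds0) \<le> phi P"
    by (rule countS[OF fin nn domP set0 eff])
  have finD: "finite (dom P)" using domP fin finite_subset by blast
  have sl: "\<forall>q\<in>dom P. snd q < int l"
  proof
    fix q assume "q \<in> dom P"
    then have "q \<in> {0..<int w} \<times> {0..<int l}" using domP bd by blast
    then show "snd q < int l" by (cases q) auto
  qed
  have "phi P \<le> card (dom P) * l" by (rule phi_bound[OF finD sl])
  with cS have cS': "length (filter (\<lambda>x. x = S) ds0) \<le> card (dom P) * l" by simp
  have "length ds0 \<le> 5 * card (dom P) * l * w ^ 2"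
  proof (cases "dom P = {}")
    case True
    then have "P = Map.empty" by simp
    then have "G []" using st0 steps_empty[of Op ds0] unfolding G_def by simp
    then show ?thesis using minl by fastforce
  next
    case False
    then obtain q where q: "q \<in> dom P" by blast
    then have "q \<in> {0..<int w} \<times> {0..<int l}" using domP bd by blast
    then have w1: "1 \<le> w" and l1: "1 \<le> l" by (cases q; auto)+
    have n1: "1 \<le> card (dom P)" using finD False by (simp add: Suc_le_eq card_gt_0_iff)
    show ?thesis using lb arith_final[OF cS' n1 l1 w1] by linarith
  qed
  then show "\<exists>ds. set ds \<subseteq> {W, S, E} \<and> length ds \<le> 5 * card (dom P) * l * w ^ 2 \<and> steps Op ds P = P'"
    using G0 unfolding G_def by blast
qed


end
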